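(* Let $n\ge 3$ and let $T_{W_n}(x,y)$ be the Tutte polynomial of the wheel graph $W_n$. Then $$1+T_{W_n}(1,x)=\sum_{k\ge0}a_{k,n}x^k,$$ where $a_{k,n}$ is the number of subgraphs of the cycle graph $C_n$ with exactly $k$ edges (a subgraph being a pair $(A,E_A)$ with $A\subseteq[n]$ non-empty and $E_A$ a set of edges of $C_n$ with both endpoints in $A$).
   Context: $C_n$ is the cycle graph on $[n]=\{1,\ldots,n\}$ with edges $\{i,i+1\}$ ($1\le i<n$) and $\{n,1\}$; $W_n$ is obtained from $C_n$ by adding a vertex $0$ adjacent to all vertices of $[n]$. $T_G(x,y)$ is the standard bivariate Tutte polynomial. *)

theory Defs
  imports Main
begin

text \<open>Graphs: a finite vertex set V and a set of edges, each edge a 2-element set of vertices.\<close>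

definition edge_rel :: "'v set set \<Rightarrow> 'v rel" where
  "edge_rel A = {(u, v). {u, v} \<in> A}"

definition num_components :: "'v set \<Rightarrow> 'v set set \<Rightarrow> nat" where
  "num_components V A = card ((\<lambda>v. ((edge_rel A)\<^sup>*) `` {v} \<inter> V) ` V)"

definition graph_rank :: "'v set \<Rightarrow> 'v set set \<Rightarrow> nat" where
  "graph_rank V A = card V - num_components V A"

definition tutte :: "'v set \<Rightarrow> 'v set set \<Rightarrow> 'a::comm_ring_1 \<Rightarrow> 'a \<Rightarrow> 'a" where
  "tutte V E x y = (\<Sum>A\<in>Pow E. (x - 1) ^ (graph_rank V E - graph_rank V A)
                                * (y - 1) ^ (card A - graph_rank V A))"

definition cycle_edges :: "nat \<Rightarrow> nat set set" where
  "cycle_edges n = {{i, i + 1} | i. 1 \<le> i \<and> i < n} \<union> {{n, 1}}"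

definition wheel_vertices :: "nat \<Rightarrow> nat set" where
  "wheel_vertices n = {0..n}"

definition wheel_edges :: "nat \<Rightarrow> nat set set" where
  "wheel_edges n = cycle_edges n \<union> {{0, i} | i. i \<in> {1..n}}"

definition cycle_subgraph_count :: "nat \<Rightarrow> nat \<Rightarrow> nat" where
  "cycle_subgraph_count k n = card {(A, EA). A \<subseteq> {1..n} \<and> A \<noteq> {} \<and>
      EA \<subseteq> cycle_edges n \<and> (\<forall>e\<in>EA. e \<subseteq> A) \<and> card EA = k}"

end

theory Submission
  imports Defs
begin


definition prv :: "nat \<Rightarrow> nat \<Rightarrow> nat" where
  "prv n i = (if i = 1 then n else i - 1)"

definition ed :: "nat \<Rightarrow> nat \<Rightarrow> nat set" where
  "ed n i = {prv n i, i}"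

lemma prv_in: "1 \<le> n \<Longrightarrow> i \<in> {1..n} \<Longrightarrow> prv n i \<in> {1..n}"
  by (auto simp: prv_def)

lemma prv_inj: "inj_on (prv n) {1..n}"
  by (auto simp: prv_def inj_on_def split: if_splits)

lemma prv_bij: "1 \<le> n \<Longrightarrow> bij_betw (prv n) {1..n} {1..n}"
proof -
  assume n: "1 \<le> n"
  have "prv n ` {1..n} \<subseteq> {1..n}" using prv_in[OF n] by auto
  moreover have "card (prv n ` {1..n}) = card {1..n::nat}"
    using card_image[OF prv_inj] by simp
  ultimately have "prv n ` {1..n} = {1..n}"
    by (simp add: card_subset_eq)
  thus ?thesis using prv_inj by (simp add: bij_betw_def)
qed

lemma propagate:
  assumes n: "1 \<le> n" and j: "j \<in> {1..n}" and Pj: "P j"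
    and step: "\<And>i. i \<in> {1..n} \<Longrightarrow> P (prv n i) \<Longrightarrow> P i"
  shows "\<forall>i\<in>{1..n}. P i"
proof -
  have up: "\<And>k. j \<le> k \<Longrightarrow> k \<le> n \<Longrightarrow> P k"
  proof -
    fix k show "j \<le> k \<Longrightarrow> k \<le> n \<Longrightarrow> P k"
    proof (induction k)
      case 0 then show ?case using Pj by simp
    next
      case (Suc m)
      show ?case
      proof (cases "Suc m = j")
        case True then show ?thesis using Pj by simp
      next
        case False
        then have "j \<le> m" using Suc by simp
        then have "P m" using Suc by simp
        moreover have "prv n (Suc m) = m" using \<open>j \<le> m\<close> j by (auto simp: prv_def)
        ultimately show ?thesis using step[of "Suc m"] Suc j by auto
      qed
    qed
  qed
  have Pn: "P n" using up j by auto
  have P1: "P 1" using step[of 1] Pn n by (simp add: prv_def)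
  have down: "\<And>k. 1 \<le> k \<Longrightarrow> k \<le> j \<Longrightarrow> P k"
  proof -
    fix k show "1 \<le> k \<Longrightarrow> k \<le> j \<Longrightarrow> P k"
    proof (induction k)
      case 0 then show ?case by simp
    next
      case (Suc m)
      show ?case
      proof (cases "m = 0")
        case True then show ?thesis using P1 by simp
      next
        case False
        then have "P m" using Suc by simp
        moreover have "prv n (Suc m) = m" using False by (auto simp: prv_def)
        ultimately show ?thesis using step[of "Suc m"] Suc j by auto
      qed
    qed
  qed
  show ?thesis using up down j by (metis atLeastAtMost_iff nat_le_linear)
qed

lemma ed_inj: "3 \<le> n \<Longrightarrow> inj_on (ed n) {1..n}"
  unfolding inj_on_def ed_def prv_def
  by (auto simp: doubleton_eq_iff split: if_splits)

lemma cycle_edges_ed: "3 \<le> n \<Longrightarrow> cycle_edges n = ed n ` {1..n}"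
proof -
  assume n: "3 \<le> n"
  show ?thesis
  proof
    show "cycle_edges n \<subseteq> ed n ` {1..n}"
    proof
      fix e assume "e \<in> cycle_edges n"
      then consider i where "1 \<le> i" "i < n" "e = {i, i+1}" | "e = {n, 1}"
        unfolding cycle_edges_def by auto
      then show "e \<in> ed n ` {1..n}"
      proof cases
        case 1
        then have "e = ed n (i+1)" by (simp add: ed_def prv_def)
        then show ?thesis using 1 by auto
      next
        case 2
        then have "e = ed n 1" by (auto simp: ed_def prv_def)
        then show ?thesis using n by auto
      qed
    qed
  next
    show "ed n ` {1..n} \<subseteq> cycle_edges n"
    proof
      fix e assume "e \<in> ed n ` {1..n}"
      then obtain i where i: "i \<in> {1..n}" "e = ed n i" by auto
      show "e \<in> cycle_edges n"
      proof (cases "i = 1")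
        case True then show ?thesis using i by (auto simp: ed_def prv_def cycle_edges_def)
      next
        case False
        then have "e = {i - 1, i - 1 + 1}" using i by (auto simp: ed_def prv_def)
        moreover have "1 \<le> i - 1" "i - 1 < n" using i False by auto
        ultimately show ?thesis unfolding cycle_edges_def by blast
      qed
    qed
  qed
qed




lemma edge_rel_sym: "(u, v) \<in> edge_rel A \<Longrightarrow> (v, u) \<in> edge_rel A"
  by (auto simp: edge_rel_def insert_commute)

lemma rtrancl_edge_sym: "(u, v) \<in> (edge_rel A)\<^sup>* \<Longrightarrow> (v, u) \<in> (edge_rel A)\<^sup>*"
proof (induction rule: rtrancl_induct)
  case base then show ?case by simp
next
  case (step y z)
  then show ?case using edge_rel_sym
    by (meson converse_rtrancl_into_rtrancl)
qed

lemma nc_one: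
  assumes "finite V" "r \<in> V"
  shows "num_components V A = 1 \<longleftrightarrow> (\<forall>v\<in>V. (v, r) \<in> (edge_rel A)\<^sup>*)"
proof -
  define cl where "cl = (\<lambda>v. ((edge_rel A)\<^sup>*) `` {v} \<inter> V)"
  have nc: "num_components V A = card (cl ` V)" by (simp add: num_components_def cl_def)
  show ?thesis
  proof
    assume "num_components V A = 1"
    then have "card (cl ` V) = 1" using nc by simp
    then obtain c where c: "cl ` V = {c}" by (meson card_1_singletonE)
    show "\<forall>v\<in>V. (v, r) \<in> (edge_rel A)\<^sup>*"
    proof
      fix v assume v: "v \<in> V"
      have "cl v = cl r" using c v assms by blast
      moreover have "v \<in> cl v" using v by (simp add: cl_def)
      ultimately have "(r, v) \<in> (edge_rel A)\<^sup>*" by (simp add: cl_def)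
      then show "(v, r) \<in> (edge_rel A)\<^sup>*" by (rule rtrancl_edge_sym)
    qed
  next
    assume all: "\<forall>v\<in>V. (v, r) \<in> (edge_rel A)\<^sup>*"
    have "\<And>v. v \<in> V \<Longrightarrow> cl v = cl r"
    proof -
      fix v assume v: "v \<in> V"
      have vr: "(v, r) \<in> (edge_rel A)\<^sup>*" using all v by blast
      have rv: "(r, v) \<in> (edge_rel A)\<^sup>*" using rtrancl_edge_sym[OF vr] .
      show "cl v = cl r"
      proof
        show "cl v \<subseteq> cl r" unfolding cl_def
        proof
          fix w assume "w \<in> (edge_rel A)\<^sup>* `` {v} \<inter> V"
          then have "(v, w) \<in> (edge_rel A)\<^sup>*" "w \<in> V" by auto
          then show "w \<in> (edge_rel A)\<^sup>* `` {r} \<inter> V" using rtrancl_trans[OF rv] by blast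
        qed
        show "cl r \<subseteq> cl v" unfolding cl_def
        proof
          fix w assume "w \<in> (edge_rel A)\<^sup>* `` {r} \<inter> V"
          then have "(r, w) \<in> (edge_rel A)\<^sup>*" "w \<in> V" by auto
          then show "w \<in> (edge_rel A)\<^sup>* `` {v} \<inter> V" using rtrancl_trans[OF vr] by blast
        qed
      qed
    qed
    then have "cl ` V = (\<lambda>_. cl r) ` V" by (intro image_cong) auto
    also have "\<dots> = {cl r}" using assms(2) by (rule image_constant)
    finally have "cl ` V = {cl r}" .
    then show "num_components V A = 1" using nc by simp
  qed
qed

lemma closure_lemma:
  assumes "(v, r) \<in> (edge_rel A)\<^sup>*" "r \<in> X"
    and cl: "\<And>u w. {u, w} \<in> A \<Longrightarrow> w \<in> X \<Longrightarrow> u \<in> X"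
  shows "v \<in> X"
  using assms(1,2)
proof (induction rule: converse_rtrancl_induct)
  case base then show ?case by simp
next
  case (step y z)
  then have "{y, z} \<in> A" "z \<in> X" by (auto simp: edge_rel_def)
  then show ?case by (rule cl)
qed

definition conn :: "nat \<Rightarrow> nat set \<Rightarrow> nat set \<Rightarrow> bool" where
  "conn n K S = (\<forall>Y. Y \<subseteq> {1..n} \<and> Y \<inter> S = {} \<and> (\<forall>i\<in>K. prv n i \<in> Y \<longleftrightarrow> i \<in> Y) \<longrightarrow> Y = {})"

definition wA :: "nat \<Rightarrow> nat set \<Rightarrow> nat set \<Rightarrow> nat set set" where
  "wA n K S = ed n ` K \<union> (\<lambda>i. {0, i}) ` S"

lemma conn_iff:
  assumes n: "3 \<le> n" and K: "K \<subseteq> {1..n}" and S: "S \<subseteq> {1..n}"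
  shows "num_components {0..n} (wA n K S) = 1 \<longleftrightarrow> conn n K S"
proof -
  have n1: "1 \<le> n" using n by simp
  have iff: "num_components {0..n} (wA n K S) = 1 \<longleftrightarrow> (\<forall>v\<in>{0..n}. (v, 0) \<in> (edge_rel (wA n K S))\<^sup>*)"
    by (rule nc_one) auto
  show ?thesis unfolding iff
  proof
    assume all: "\<forall>v\<in>{0..n}. (v, 0) \<in> (edge_rel (wA n K S))\<^sup>*"
    show "conn n K S" unfolding conn_def
    proof (intro allI impI)
      fix Y assume Y: "Y \<subseteq> {1..n} \<and> Y \<inter> S = {} \<and> (\<forall>i\<in>K. prv n i \<in> Y \<longleftrightarrow> i \<in> Y)"
      define X where "X = {0..n} - Y"
      have cl: "\<And>u w. {u, w} \<in> wA n K S \<Longrightarrow> w \<in> X \<Longrightarrow> u \<in> X"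
      proof -
        fix u w assume e: "{u, w} \<in> wA n K S" and w: "w \<in> X"
        then consider i where "i \<in> K" "{u, w} = {prv n i, i}" | i where "i \<in> S" "{u, w} = {0, i}"
          unfolding wA_def ed_def by auto
        then show "u \<in> X"
        proof cases
          case 1
          have i: "i \<in> {1..n}" using 1 K by auto
          have pi: "prv n i \<in> {1..n}" using prv_in[OF n1 i] .
          show ?thesis using 1 Y w i pi unfolding X_def by (auto simp: doubleton_eq_iff)
        next
          case 2
          have i: "i \<in> {1..n}" using 2 S by auto
          show ?thesis using 2 Y w i unfolding X_def by (auto simp: doubleton_eq_iff)
        qed
      qed
      have "0 \<in> X" using Y by (auto simp: X_def)
      have vX: "v \<in> X" if v: "v \<in> {0..n}" for v
      proof (rule closure_lemma[of v 0 "wA n K S" X])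
        show "(v, 0) \<in> (edge_rel (wA n K S))\<^sup>*" using all v by blast
        show "0 \<in> X" by fact
        show "\<And>u w. {u, w} \<in> wA n K S \<Longrightarrow> w \<in> X \<Longrightarrow> u \<in> X" by (rule cl)
      qed
      show "Y = {}"
      proof (rule ccontr)
        assume "Y \<noteq> {}"
        then obtain v where v: "v \<in> Y" by blast
        then have "v \<in> {0..n}" using Y by auto
        then have "v \<in> X" by (rule vX)
        then show False using v by (simp add: X_def)
      qed
    qed
  next
    assume c: "conn n K S"
    define Z where "Z = {v. (v, 0) \<in> (edge_rel (wA n K S))\<^sup>*}"
    define Y where "Y = {1..n} - Z"
    have rel: "\<And>u w. {u, w} \<in> wA n K S \<Longrightarrow> u \<in> Z \<longleftrightarrow> w \<in> Z"
    proof -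
      fix u w assume e: "{u, w} \<in> wA n K S"
      then have "(u, w) \<in> edge_rel (wA n K S)" "(w, u) \<in> edge_rel (wA n K S)"
        by (auto simp: edge_rel_def insert_commute)
      then show "u \<in> Z \<longleftrightarrow> w \<in> Z" unfolding Z_def mem_Collect_eq
        by (blast intro: converse_rtrancl_into_rtrancl)
    qed
    have "Y = {}"
    proof -
      have "Y \<inter> S = {}"
      proof -
        have "\<And>i. i \<in> S \<Longrightarrow> i \<in> Z"
        proof -
          fix i assume "i \<in> S"
          then have "{0, i} \<in> wA n K S" by (simp add: wA_def)
          moreover have "0 \<in> Z" by (simp add: Z_def)
          ultimately show "i \<in> Z" using rel by blast
        qed
        then show ?thesis by (auto simp: Y_def)
      qed
      moreover have "\<forall>i\<in>K. prv n i \<in> Y \<longleftrightarrow> i \<in> Y"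
      proof
        fix i assume i: "i \<in> K"
        then have "{prv n i, i} \<in> wA n K S" by (simp add: wA_def ed_def)
        then have "prv n i \<in> Z \<longleftrightarrow> i \<in> Z" using rel by blast
        moreover have "i \<in> {1..n}" "prv n i \<in> {1..n}" using i K prv_in[OF n1] by auto
        ultimately show "prv n i \<in> Y \<longleftrightarrow> i \<in> Y" by (auto simp: Y_def)
      qed
      moreover have "Y \<subseteq> {1..n}" by (auto simp: Y_def)
      ultimately show ?thesis using c unfolding conn_def by simp
    qed
    then have sub: "{1..n} \<subseteq> Z" by (auto simp: Y_def)
    show "\<forall>v\<in>{0..n}. (v, 0) \<in> (edge_rel (wA n K S))\<^sup>*"
    proof
      fix v assume v: "v \<in> {0..n}"
      show "(v, 0) \<in> (edge_rel (wA n K S))\<^sup>*"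
      proof (cases "v = 0")
        case True then show ?thesis by simp
      next
        case False then have "v \<in> {1..n}" using v by auto
        then show ?thesis using sub unfolding Z_def by blast
      qed
    qed
  qed
qed




definition lv :: "bool \<Rightarrow> bool \<Rightarrow> bool \<Rightarrow> bool \<Rightarrow> bool" where
  "lv bp c s b = ((c \<or> bp) \<and> (b \<longleftrightarrow> s \<or> (c \<and> bp)))"

definition valid :: "nat \<Rightarrow> nat set \<Rightarrow> nat set \<Rightarrow> nat set \<Rightarrow> bool" where
  "valid n K S B = (\<forall>i\<in>{1..n}. lv (prv n i \<in> B) (i \<in> K) (i \<in> S) (i \<in> B))"

lemma valid_exists:
  assumes n: "3 \<le> n" and K: "K \<subseteq> {1..n}" and S: "S \<subseteq> {1..n}" and c: "conn n K S"
  shows "\<exists>B\<subseteq>{1..n}. valid n K S B"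
proof -
  have n1: "1 \<le> n" using n by simp
  define D where "D = {(prv n i, i) | i. i \<in> K}"
  have D_iff: "\<And>u w. (u, w) \<in> D \<longleftrightarrow> w \<in> K \<and> u = prv n w" by (auto simp: D_def)
  define B where "B = {i\<in>{1..n}. \<exists>j\<in>S. (j, i) \<in> D\<^sup>*}"
  have inj: "\<And>a b. a \<in> {1..n} \<Longrightarrow> b \<in> {1..n} \<Longrightarrow> prv n a = prv n b \<Longrightarrow> a = b"
    using prv_inj by (meson inj_onD)
  have eq: "i \<in> B \<longleftrightarrow> i \<in> S \<or> (i \<in> K \<and> prv n i \<in> B)" if i: "i \<in> {1..n}" for i
  proof
    assume "i \<in> B"
    then obtain j where j: "j \<in> S" "(j, i) \<in> D\<^sup>*" by (auto simp: B_def)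
    from j(2) show "i \<in> S \<or> (i \<in> K \<and> prv n i \<in> B)"
    proof (cases rule: rtranclE)
      case base then show ?thesis using j by simp
    next
      case (step z)
      then have "i \<in> K" "z = prv n i" using D_iff by auto
      moreover have "prv n i \<in> {1..n}" using prv_in[OF n1 i] .
      ultimately show ?thesis using step j unfolding B_def by auto
    qed
  next
    assume "i \<in> S \<or> (i \<in> K \<and> prv n i \<in> B)"
    then show "i \<in> B"
    proof
      assume "i \<in> S" then show ?thesis using i by (auto simp: B_def)
    next
      assume h: "i \<in> K \<and> prv n i \<in> B"
      then obtain j where j: "j \<in> S" "(j, prv n i) \<in> D\<^sup>*" by (auto simp: B_def)
      have "(prv n i, i) \<in> D" using h D_iff by simp
      then have "(j, i) \<in> D\<^sup>*" by (rule rtrancl_into_rtrancl[OF j(2)])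
      then show ?thesis using i j(1) by (auto simp: B_def)
    qed
  qed
  have bd: "prv n i \<in> B" if i: "i \<in> {1..n}" "i \<notin> K" for i
  proof (rule ccontr)
    assume nb: "prv n i \<notin> B"
    have pi: "prv n i \<in> {1..n}" using prv_in[OF n1 i(1)] .
    define Y where "Y = {v\<in>{1..n}. (v, prv n i) \<in> D\<^sup>*}"
    have Y1: "Y \<subseteq> {1..n}" by (auto simp: Y_def)
    have Y2: "Y \<inter> S = {}"
    proof -
      have False if v: "v \<in> Y" "v \<in> S" for v
      proof -
        have "(v, prv n i) \<in> D\<^sup>*" using v by (simp add: Y_def)
        then have "prv n i \<in> B" using pi v(2) by (auto simp: B_def)
        then show False using nb by simp
      qed
      then show ?thesis by blast
    qed
    have Y3: "\<forall>k\<in>K. prv n k \<in> Y \<longleftrightarrow> k \<in> Y"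
    proof
      fix k assume k: "k \<in> K"
      have kI: "k \<in> {1..n}" using k K by auto
      have pk: "prv n k \<in> {1..n}" using prv_in[OF n1 kI] .
      have dk: "(prv n k, k) \<in> D" using k D_iff by simp
      show "prv n k \<in> Y \<longleftrightarrow> k \<in> Y"
      proof
        assume "prv n k \<in> Y"
        then have r: "(prv n k, prv n i) \<in> D\<^sup>*" by (simp add: Y_def)
        from r show "k \<in> Y"
        proof (cases rule: converse_rtranclE)
          case base
          then have "k = i" using inj[OF kI i(1)] by simp
          then show ?thesis using k i(2) by simp
        next
          case (step z)
          then have "z \<in> K" "prv n k = prv n z" using D_iff by auto
          then have "z = k" using inj[OF kI, of z] K by auto
          then show ?thesis using step kI by (simp add: Y_def)
        qed
      next
        assume "k \<in> Y"
        then have "(k, prv n i) \<in> D\<^sup>*" by (simp add: Y_def)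
        then have "(prv n k, prv n i) \<in> D\<^sup>*" by (rule converse_rtrancl_into_rtrancl[OF dk])
        then show "prv n k \<in> Y" using pk by (simp add: Y_def)
      qed
    qed
    have "Y = {}" using c Y1 Y2 Y3 unfolding conn_def by simp
    moreover have "prv n i \<in> Y" using pi by (simp add: Y_def)
    ultimately show False by simp
  qed
  have "B \<subseteq> {1..n}" by (auto simp: B_def)
  moreover have "valid n K S B" unfolding valid_def lv_def
  proof
    fix i assume i: "i \<in> {1..n}"
    show "(i \<in> K \<or> prv n i \<in> B) \<and> (i \<in> B \<longleftrightarrow> i \<in> S \<or> (i \<in> K \<and> prv n i \<in> B))"
      using eq[OF i] bd[OF i] by blast
  qed
  ultimately show ?thesis by blast
qed

lemma valid_unique:
  assumes n: "3 \<le> n" and K: "K \<subseteq> {1..n}" and S: "S \<subseteq> {1..n}"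
    and nt: "\<not> (K = {1..n} \<and> S = {})"
    and B: "B \<subseteq> {1..n}" "valid n K S B" and B': "B' \<subseteq> {1..n}" "valid n K S B'"
  shows "B = B'"
proof -
  have n1: "1 \<le> n" using n by simp
  have e1: "\<And>i. i \<in> {1..n} \<Longrightarrow> lv (prv n i \<in> B) (i \<in> K) (i \<in> S) (i \<in> B)"
    using B(2) by (simp add: valid_def)
  have e2: "\<And>i. i \<in> {1..n} \<Longrightarrow> lv (prv n i \<in> B') (i \<in> K) (i \<in> S) (i \<in> B')"
    using B'(2) by (simp add: valid_def)
  obtain j where j: "j \<in> {1..n}" "j \<in> B \<longleftrightarrow> j \<in> B'"
  proof (cases "K = {1..n}")
    case True
    then obtain j where "j \<in> S" using nt by blast
    then show ?thesis using that e1 e2 S by (auto simp: lv_def)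
  next
    case False
    then obtain j where "j \<in> {1..n}" "j \<notin> K" using K by blast
    then show ?thesis using that e1[of j] e2[of j] by (auto simp: lv_def)
  qed
  have "\<forall>i\<in>{1..n}. (i \<in> B \<longleftrightarrow> i \<in> B')"
  proof (rule propagate[OF n1 j(1)])
    show "j \<in> B \<longleftrightarrow> j \<in> B'" by (rule j(2))
    fix i assume i: "i \<in> {1..n}" and p: "prv n i \<in> B \<longleftrightarrow> prv n i \<in> B'"
    show "i \<in> B \<longleftrightarrow> i \<in> B'" using e1[OF i] e2[OF i] p by (auto simp: lv_def)
  qed
  then show ?thesis using B(1) B'(1) by blast
qed

lemma valid_conn:
  assumes n: "3 \<le> n" and K: "K \<subseteq> {1..n}" and S: "S \<subseteq> {1..n}"
    and nt: "\<not> (K = {1..n} \<and> S = {})"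
    and B: "valid n K S B"
  shows "conn n K S"
  unfolding conn_def
proof (intro allI impI)
  have n1: "1 \<le> n" using n by simp
  have e: "\<And>i. i \<in> {1..n} \<Longrightarrow> lv (prv n i \<in> B) (i \<in> K) (i \<in> S) (i \<in> B)"
    using B by (simp add: valid_def)
  fix Y assume Y: "Y \<subseteq> {1..n} \<and> Y \<inter> S = {} \<and> (\<forall>i\<in>K. prv n i \<in> Y \<longleftrightarrow> i \<in> Y)"
  show "Y = {}"
  proof (rule ccontr)
    assume ne: "Y \<noteq> {}"
    show False
    proof (cases "Y = {1..n}")
      case False
      then obtain j where j: "j \<in> {1..n}" "j \<notin> Y" using Y by blast
      have Q: "\<forall>i\<in>{1..n}. i \<in> Y \<longrightarrow> i \<notin> B"
      proof (rule propagate[OF n1 j(1)])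
        show "j \<in> Y \<longrightarrow> j \<notin> B" using j by simp
        fix i assume i: "i \<in> {1..n}" and p: "prv n i \<in> Y \<longrightarrow> prv n i \<notin> B"
        show "i \<in> Y \<longrightarrow> i \<notin> B"
        proof
          assume iY: "i \<in> Y"
          then have iS: "i \<notin> S" using Y by blast
          show "i \<notin> B"
          proof (cases "i \<in> K")
            case True
            then have "prv n i \<in> Y" using Y iY by blast
            then show ?thesis using e[OF i] p iS True by (auto simp: lv_def)
          next
            case False
            then show ?thesis using e[OF i] iS by (auto simp: lv_def)
          qed
        qed
      qed
      obtain i where i: "i \<in> {1..n}" "prv n i \<in> Y" "i \<notin> Y"
      proof (rule ccontr)
        assume "\<not> thesis"
        then have h: "\<And>i. i \<in> {1..n} \<Longrightarrow> prv n i \<in> Y \<Longrightarrow> i \<in> Y" using that by blast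
        obtain y where y: "y \<in> Y" using ne by blast
        have "\<forall>i\<in>{1..n}. i \<in> Y"
          by (rule propagate[OF n1, of y]) (use y Y h in auto)
        then show False using False Y by blast
      qed
      have "i \<notin> K" using i Y by blast
      then have "prv n i \<in> B" using e[OF i(1)] by (simp add: lv_def)
      moreover have "prv n i \<in> {1..n}" using prv_in[OF n1 i(1)] .
      ultimately show False using Q i(2) by blast
    next
      case True
      then have "S = {}" using Y S by blast
      then have "K \<noteq> {1..n}" using nt by blast
      then obtain j where j: "j \<in> {1..n}" "j \<notin> K" using K by blast
      have Q: "\<forall>i\<in>{1..n}. i \<notin> B"
      proof (rule propagate[OF n1 j(1)])
        show "j \<notin> B" using e[OF j(1)] j(2) \<open>S = {}\<close> by (simp add: lv_def)
        fix i assume i: "i \<in> {1..n}" and p: "prv n i \<notin> B"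
        show "i \<notin> B" using e[OF i] p \<open>S = {}\<close> by (auto simp: lv_def)
      qed
      have "prv n j \<in> B" using e[OF j(1)] j(2) by (simp add: lv_def)
      moreover have "prv n j \<in> {1..n}" using prv_in[OF n1 j(1)] .
      ultimately show False using Q by blast
    qed
  qed
qed

lemma valid_full:
  assumes n: "3 \<le> n" and B: "B \<subseteq> {1..n}"
  shows "valid n {1..n} {} B \<longleftrightarrow> B = {} \<or> B = {1..n}"
proof -
  have n1: "1 \<le> n" using n by simp
  have v: "valid n {1..n} {} B \<longleftrightarrow> (\<forall>i\<in>{1..n}. i \<in> B \<longleftrightarrow> prv n i \<in> B)"
    by (auto simp: valid_def lv_def)
  show ?thesis unfolding v
  proof
    assume h: "\<forall>i\<in>{1..n}. i \<in> B \<longleftrightarrow> prv n i \<in> B"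
    show "B = {} \<or> B = {1..n}"
    proof (cases "B = {}")
      case False
      then obtain j where j: "j \<in> B" by blast
      have "\<forall>i\<in>{1..n}. i \<in> B"
        by (rule propagate[OF n1, of j]) (use j B h in auto)
      then show ?thesis using B by blast
    qed simp
  next
    assume "B = {} \<or> B = {1..n}"
    then show "\<forall>i\<in>{1..n}. i \<in> B \<longleftrightarrow> prv n i \<in> B" using prv_in[OF n1] by auto
  qed
qed

lemma valid_count:
  assumes n: "3 \<le> n" and K: "K \<subseteq> {1..n}" and S: "S \<subseteq> {1..n}" and B: "B \<subseteq> {1..n}"
    and v: "valid n K S B"
  shows "card {i\<in>{1..n}. i \<in> K \<and> i \<in> S \<and> prv n i \<in> B} + n = card K + card S"
proof -
  have n1: "1 \<le> n" using n by simp
  let ?I = "{1..n::nat}"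
  have loc: "of_bool (i \<in> K \<and> i \<in> S \<and> prv n i \<in> B) + 1 + of_bool (i \<in> B)
      = of_bool (i \<in> K) + of_bool (i \<in> S) + (of_bool (prv n i \<in> B) :: nat)" if i: "i \<in> ?I" for i
    using v i unfolding valid_def lv_def by (auto split: if_splits)
  define f where "f i = (of_bool (i \<in> K \<and> i \<in> S \<and> prv n i \<in> B) :: nat)" for i
  define g where "g i = (of_bool (i \<in> B) :: nat)" for i
  define a where "a i = (of_bool (i \<in> K) :: nat)" for i
  define b where "b i = (of_bool (i \<in> S) :: nat)" for i
  define p where "p i = (of_bool (prv n i \<in> B) :: nat)" for i
  have "(\<Sum>i\<in>?I. f i + 1 + g i) = (\<Sum>i\<in>?I. a i + b i + p i)"
    using loc unfolding f_def g_def a_def b_def p_def by (rule sum.cong[OF refl])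
  then have "sum f ?I + sum (\<lambda>_. 1) ?I + sum g ?I = sum a ?I + sum b ?I + sum p ?I"
    by (simp only: sum.distrib)
  moreover have "sum p ?I = sum g ?I"
    unfolding p_def g_def
    using sum.reindex_bij_betw[OF prv_bij[OF n1], of "\<lambda>i. (of_bool (i \<in> B) :: nat)"] by simp
  moreover have "sum (\<lambda>_. 1) ?I = n" by simp
  ultimately have eq: "sum f ?I + n = sum a ?I + sum b ?I" by simp
  have "sum a ?I = card K" unfolding a_def using K by (simp add: Int_absorb1 Int_def[symmetric])
  moreover have "sum b ?I = card S" unfolding b_def using S by simp (metis Int_absorb1 Int_commute Collect_mem_eq)
  moreover have "sum f ?I = card {i\<in>?I. i \<in> K \<and> i \<in> S \<and> prv n i \<in> B}" unfolding f_def
    by (simp add: Int_def)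
  ultimately show ?thesis using eq by simp
qed




lemma sum_Pow_prod:
  fixes g :: "'b \<Rightarrow> bool \<Rightarrow> 'a::comm_ring_1"
  assumes "finite I"
  shows "(\<Sum>K\<in>Pow I. \<Prod>i\<in>I. g i (i \<in> K)) = (\<Prod>i\<in>I. g i True + g i False)"
proof -
  have "(\<Prod>i\<in>I. g i True + g i False)
      = (\<Sum>X\<in>Pow I. (\<Prod>i\<in>X. g i True) * (\<Prod>i\<in>I-X. g i False))"
    by (rule prod_add[OF assms])
  also have "\<dots> = (\<Sum>K\<in>Pow I. \<Prod>i\<in>I. g i (i \<in> K))"
  proof (rule sum.cong[OF refl])
    fix K assume K: "K \<in> Pow I"
    have "(\<Prod>i\<in>I. g i (i \<in> K)) = (\<Prod>i\<in>I. if i \<in> K then g i True else g i False)"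
      by (rule prod.cong) auto
    also have "\<dots> = (\<Prod>i\<in>I \<inter> {i. i \<in> K}. g i True) * (\<Prod>i\<in>I \<inter> - {i. i \<in> K}. g i False)"
      by (rule prod.If_cases[OF assms])
    also have "I \<inter> {i. i \<in> K} = K" using K by auto
    also have "I \<inter> - {i. i \<in> K} = I - K" by auto
    finally show "(\<Prod>i\<in>K. g i True) * (\<Prod>i\<in>I-K. g i False) = (\<Prod>i\<in>I. g i (i \<in> K))" by simp
  qed
  finally show ?thesis by simp
qed

lemma prod_if_pow:
  fixes y :: "'a::comm_ring_1"
  assumes "finite F"
  shows "(\<Prod>i\<in>F. if P i then y else 1) = y ^ card {i\<in>F. P i}"
proof -
  have "(\<Prod>i\<in>F. if P i then y else 1) = (\<Prod>i\<in>F \<inter> {i. P i}. y) * (\<Prod>i\<in>F \<inter> - {i. P i}. 1)"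
    by (rule prod.If_cases[OF assms])
  also have "\<dots> = y ^ card (F \<inter> {i. P i})" by simp
  also have "F \<inter> {i. P i} = {i\<in>F. P i}" by auto
  finally show ?thesis .
qed

lemma sum_Pow_pow:
  fixes x :: "'a::comm_ring_1"
  assumes "finite F"
  shows "(\<Sum>E\<in>Pow F. x ^ card E) = (1 + x) ^ card F"
proof -
  have "(\<Sum>E\<in>Pow F. x ^ card E) = (\<Sum>E\<in>Pow F. \<Prod>i\<in>F. (\<lambda>i b. if b then x else 1) i (i \<in> E))"
  proof (rule sum.cong[OF refl])
    fix E assume E: "E \<in> Pow F"
    have "(\<Prod>i\<in>F. if i \<in> E then x else 1) = x ^ card {i\<in>F. i \<in> E}" by (rule prod_if_pow[OF assms])
    also have "{i\<in>F. i \<in> E} = E" using E by auto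
    finally show "x ^ card E = (\<Prod>i\<in>F. (\<lambda>i b. if b then x else 1) i (i \<in> E))" by simp
  qed
  also have "\<dots> = (\<Prod>i\<in>F. (\<lambda>i b. if b then x else 1) i True + (\<lambda>i b. if b then x else 1) i False)"
    by (rule sum_Pow_prod[OF assms])
  also have "\<dots> = (\<Prod>i\<in>F. x + 1)" by simp
  also have "\<dots> = (1 + x) ^ card F" by (simp add: add.commute)
  finally show ?thesis .
qed

lemma group_pow:
  fixes x :: "'a::comm_ring_1" and g :: "'b \<Rightarrow> nat"
  assumes P: "finite P" and m: "\<forall>p\<in>P. g p \<le> m"
  shows "(\<Sum>p\<in>P. x ^ g p) = (\<Sum>k\<le>m. of_nat (card {p\<in>P. g p = k}) * x ^ k)"
proof -
  have "(\<Sum>p\<in>P. x ^ g p) = (\<Sum>p\<in>P. \<Sum>k\<le>m. if g p = k then x ^ k else 0)"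
  proof (rule sum.cong[OF refl])
    fix p assume "p \<in> P"
    then have "g p \<in> {..m}" using m by auto
    then show "x ^ g p = (\<Sum>k\<le>m. if g p = k then x ^ k else 0)" by simp
  qed
  also have "\<dots> = (\<Sum>k\<le>m. \<Sum>p\<in>P. if g p = k then x ^ k else 0)" by (rule sum.swap)
  also have "\<dots> = (\<Sum>k\<le>m. of_nat (card {p\<in>P. g p = k}) * x ^ k)"
  proof (rule sum.cong[OF refl])
    fix k
    have "(\<Sum>p\<in>P. if g p = k then x ^ k else 0) = (\<Sum>p\<in>P \<inter> {p. g p = k}. x ^ k)"
      using sum.If_cases[OF P, of "\<lambda>p. g p = k" "\<lambda>_. x ^ k" "\<lambda>_. 0"] by simp
    also have "\<dots> = of_nat (card (P \<inter> {p. g p = k})) * x ^ k" by simp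
    also have "P \<inter> {p. g p = k} = {p\<in>P. g p = k}" by auto
    finally show "(\<Sum>p\<in>P. if g p = k then x ^ k else 0) = of_nat (card {p\<in>P. g p = k}) * x ^ k" .
  qed
  finally show ?thesis .
qed




lemma zero_notin_ed: "i \<in> {1..n} \<Longrightarrow> 0 \<notin> ed n i"
  by (auto simp: ed_def prv_def)

lemma wheel_wA: "3 \<le> n \<Longrightarrow> wheel_edges n = wA n {1..n} {1..n}"
  by (auto simp: wheel_edges_def wA_def cycle_edges_ed)

lemma wA_parts:
  assumes K: "K \<subseteq> {1..n}"
  shows "{e\<in>wA n K S. 0 \<in> e} = (\<lambda>i. {0, i}) ` S" "{e\<in>wA n K S. 0 \<notin> e} = ed n ` K"
  using zero_notin_ed K by (auto simp: wA_def)

lemma spk_inj: "inj_on (\<lambda>i::nat. {0, i}) X"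
  by (auto simp: inj_on_def doubleton_eq_iff)

lemma wA_inj:
  assumes n: "3 \<le> n" and K: "K \<subseteq> {1..n}" "K' \<subseteq> {1..n}"
    and eq: "wA n K S = wA n K' S'"
  shows "K = K' \<and> S = S'"
proof
  have "ed n ` K = ed n ` K'" using wA_parts(2)[OF K(1)] wA_parts(2)[OF K(2)] eq by metis
  then show "K = K'" using inj_on_image_eq_iff[OF ed_inj[OF n] K] by simp
  have "(\<lambda>i. {0, i}) ` S = (\<lambda>i. {0, i}) ` S'" using wA_parts(1)[OF K(1)] wA_parts(1)[OF K(2)] eq by metis
  then show "S = S'" using inj_on_image_eq_iff[OF spk_inj[of "S \<union> S'"]] by blast
qed

lemma wA_bij:
  assumes n: "3 \<le> n"
  shows "bij_betw (\<lambda>(K, S). wA n K S) (Pow {1..n} \<times> Pow {1..n}) (Pow (wheel_edges n))"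
proof (rule bij_betw_imageI)
  show "inj_on (\<lambda>(K, S). wA n K S) (Pow {1..n} \<times> Pow {1..n})"
    using wA_inj[OF n] by (auto simp: inj_on_def)
  show "(\<lambda>(K, S). wA n K S) ` (Pow {1..n} \<times> Pow {1..n}) = Pow (wheel_edges n)"
  proof
    show "(\<lambda>(K, S). wA n K S) ` (Pow {1..n} \<times> Pow {1..n}) \<subseteq> Pow (wheel_edges n)"
      unfolding wheel_wA[OF n] by (auto simp: wA_def)
    show "Pow (wheel_edges n) \<subseteq> (\<lambda>(K, S). wA n K S) ` (Pow {1..n} \<times> Pow {1..n})"
    proof
      fix A assume A: "A \<in> Pow (wheel_edges n)"
      define K where "K = {i\<in>{1..n}. ed n i \<in> A}"
      define S where "S = {i\<in>{1..n}. {0, i} \<in> A}"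
      have "A = wA n K S"
      proof
        show "A \<subseteq> wA n K S"
        proof
          fix e assume e: "e \<in> A"
          then have "e \<in> wA n {1..n} {1..n}" using A wheel_wA[OF n] by auto
          then show "e \<in> wA n K S" using e unfolding wA_def K_def S_def by auto
        qed
        show "wA n K S \<subseteq> A" unfolding wA_def K_def S_def by auto
      qed
      moreover have "(K, S) \<in> Pow {1..n} \<times> Pow {1..n}" by (auto simp: K_def S_def)
      ultimately show "A \<in> (\<lambda>(K, S). wA n K S) ` (Pow {1..n} \<times> Pow {1..n})" by force
    qed
  qed
qed

lemma card_wA:
  assumes n: "3 \<le> n" and K: "K \<subseteq> {1..n}" and S: "S \<subseteq> {1..n}"
  shows "card (wA n K S) = card K + card S"
proof -
  have fin: "finite K" "finite S" using K S finite_subset by auto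
  have "ed n ` K \<inter> (\<lambda>i. {0, i}) ` S = {}"
  proof (rule ccontr)
    assume "ed n ` K \<inter> (\<lambda>i. {0, i}) ` S \<noteq> {}"
    then obtain i j where i: "i \<in> K" and j: "ed n i = {0, j}" by blast
    then have "0 \<in> ed n i" by simp
    moreover have "i \<in> {1..n}" using i K by blast
    ultimately show False using zero_notin_ed by blast
  qed
  then have "card (wA n K S) = card (ed n ` K) + card ((\<lambda>i. {0, i}) ` S)"
    unfolding wA_def using fin by (simp add: card_Un_disjoint)
  also have "card (ed n ` K) = card K" using inj_on_subset[OF ed_inj[OF n] K] by (simp add: card_image)
  also have "card ((\<lambda>i. {0, i}) ` S) = card S" using spk_inj by (simp add: card_image)
  finally show ?thesis .
qed

lemma nc_pos: "finite V \<Longrightarrow> V \<noteq> {} \<Longrightarrow> num_components V A \<ge> 1"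
  unfolding num_components_def by (simp add: Suc_le_eq card_gt_0_iff)

lemma nc_le: "finite V \<Longrightarrow> num_components V A \<le> card V"
  unfolding num_components_def by (rule card_image_le)

lemma conn_full: "conn n K {1..n}"
  unfolding conn_def by auto

lemma tutte_eq:
  fixes x :: "'a::comm_ring_1"
  assumes n: "3 \<le> n"
  shows "tutte {0..n} (wheel_edges n) 1 x
    = (\<Sum>K\<in>Pow {1..n}. \<Sum>S\<in>Pow {1..n}. if conn n K S then (x - 1) ^ (card K + card S - n) else 0)"
proof -
  let ?I = "{1..n::nat}"
  have cV: "card {0..n} = n + 1" by simp
  have rE: "graph_rank {0..n} (wheel_edges n) = n"
    using conn_iff[OF n, of ?I ?I] conn_full[of n ?I] wheel_wA[OF n]
    by (simp add: graph_rank_def)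
  have "tutte {0..n} (wheel_edges n) 1 x
     = (\<Sum>A\<in>Pow (wheel_edges n). (1 - 1) ^ (graph_rank {0..n} (wheel_edges n) - graph_rank {0..n} A)
                                * (x - 1) ^ (card A - graph_rank {0..n} A))"
    by (simp add: tutte_def)
  also have "\<dots> = (\<Sum>p\<in>Pow ?I \<times> Pow ?I. (\<lambda>A. (1 - 1) ^ (graph_rank {0..n} (wheel_edges n) - graph_rank {0..n} A)
                                * (x - 1) ^ (card A - graph_rank {0..n} A)) ((\<lambda>(K, S). wA n K S) p))"
    by (rule sum.reindex_bij_betw[OF wA_bij[OF n], symmetric])
  also have "\<dots> = (\<Sum>K\<in>Pow ?I. \<Sum>S\<in>Pow ?I. (1 - 1) ^ (n - graph_rank {0..n} (wA n K S))
                                * (x - 1) ^ (card (wA n K S) - graph_rank {0..n} (wA n K S)))"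
    by (simp add: sum.cartesian_product rE case_prod_unfold)
  also have "\<dots> = (\<Sum>K\<in>Pow ?I. \<Sum>S\<in>Pow ?I. if conn n K S then (x - 1) ^ (card K + card S - n) else 0)"
  proof (intro sum.cong refl)
    fix K S assume K: "K \<in> Pow ?I" and S: "S \<in> Pow ?I"
    have c1: "num_components {0..n} (wA n K S) \<ge> 1" by (rule nc_pos) auto
    have c2: "num_components {0..n} (wA n K S) \<le> n + 1" using nc_le[of "{0..n}" "wA n K S"] by simp
    show "(1 - 1) ^ (n - graph_rank {0..n} (wA n K S)) * (x - 1) ^ (card (wA n K S) - graph_rank {0..n} (wA n K S))
        = (if conn n K S then (x - 1) ^ (card K + card S - n) else (0::'a))"
    proof (cases "conn n K S")
      case True
      then have "num_components {0..n} (wA n K S) = 1" using conn_iff[OF n] K S by auto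
      then have "graph_rank {0..n} (wA n K S) = n" by (simp add: graph_rank_def)
      then show ?thesis using True card_wA[OF n] K S by simp
    next
      case False
      then have "num_components {0..n} (wA n K S) \<noteq> 1" using conn_iff[OF n] K S by auto
      then have "n - graph_rank {0..n} (wA n K S) > 0" using c1 c2 by (simp add: graph_rank_def)
      then show ?thesis using False by (simp add: zero_power)
    qed
  qed
  finally show ?thesis .
qed




definition loc :: "'a::comm_ring_1 \<Rightarrow> bool \<Rightarrow> bool \<Rightarrow> bool \<Rightarrow> bool \<Rightarrow> 'a" where
  "loc y bp c s b = (if lv bp c s b then (if c \<and> s \<and> bp then y else 1) else 0)"

definition Tc :: "nat \<Rightarrow> nat set \<Rightarrow> nat set \<Rightarrow> nat set \<Rightarrow> nat" where
  "Tc n K S B = card {i\<in>{1..n}. i \<in> K \<and> i \<in> S \<and> prv n i \<in> B}"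

lemma loc_sum:
  fixes x :: "'a::comm_ring_1"
  shows "(loc (x - 1) bp True True b + loc (x - 1) bp True False b)
       + (loc (x - 1) bp False True b + loc (x - 1) bp False False b)
       = (if bp \<and> b then 1 + x else 1)"
  by (cases bp; cases b) (simp_all add: loc_def lv_def algebra_simps)

lemma prod_loc:
  fixes y :: "'a::comm_ring_1"
  shows "(\<Prod>i\<in>{1..n}. loc y (prv n i \<in> B) (i \<in> K) (i \<in> S) (i \<in> B))
       = (if valid n K S B then y ^ Tc n K S B else 0)"
proof (cases "valid n K S B")
  case True
  then have "(\<Prod>i\<in>{1..n}. loc y (prv n i \<in> B) (i \<in> K) (i \<in> S) (i \<in> B))
      = (\<Prod>i\<in>{1..n}. if i \<in> K \<and> i \<in> S \<and> prv n i \<in> B then y else 1)"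
    by (intro prod.cong refl) (auto simp: loc_def valid_def)
  also have "\<dots> = y ^ Tc n K S B" unfolding Tc_def by (rule prod_if_pow) simp
  finally show ?thesis using True by simp
next
  case False
  then obtain i where i: "i \<in> {1..n}" "\<not> lv (prv n i \<in> B) (i \<in> K) (i \<in> S) (i \<in> B)"
    by (auto simp: valid_def)
  have "(\<Prod>i\<in>{1..n}. loc y (prv n i \<in> B) (i \<in> K) (i \<in> S) (i \<in> B)) = 0"
  proof (rule prod_zero)
    show "\<exists>a\<in>{1..n}. loc y (prv n a \<in> B) (a \<in> K) (a \<in> S) (a \<in> B) = 0"
      using i by (intro bexI[of _ i]) (simp_all add: loc_def)
  qed simp
  then show ?thesis using False by simp
qed

lemma sumB:
  fixes y :: "'a::comm_ring_1"
  assumes n: "3 \<le> n" and K: "K \<subseteq> {1..n}" and S: "S \<subseteq> {1..n}"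
  shows "(\<Sum>B\<in>Pow {1..n}. if valid n K S B then y ^ Tc n K S B else 0)
       = (if conn n K S then y ^ (card K + card S - n) else 0) + (if K = {1..n} \<and> S = {} then 2 else 0)"
proof (cases "K = {1..n} \<and> S = {}")
  case True
  have nc: "\<not> conn n K S"
  proof
    assume "conn n K S"
    then have h: "{1..n} \<subseteq> {1..n} \<and> {1..n} \<inter> S = {} \<and> (\<forall>i\<in>K. prv n i \<in> {1..n} \<longleftrightarrow> i \<in> {1..n})
        \<longrightarrow> {1..n} = ({}::nat set)" unfolding conn_def by (rule spec)
    have "\<forall>i\<in>K. prv n i \<in> {1..n} \<longleftrightarrow> i \<in> {1..n}" using True prv_in[of n] n by auto
    then have "{1..n} = ({}::nat set)" using h True by simp
    then show False using n by simp
  qed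
  have "(\<Sum>B\<in>Pow {1..n}. if valid n K S B then y ^ Tc n K S B else 0)
      = (\<Sum>B\<in>Pow {1..n}. if B \<in> {{}, {1..n}} then 1 else 0)"
  proof (intro sum.cong refl)
    fix B assume B: "B \<in> Pow {1..n}"
    have "Tc n K S B = 0" using True by (simp add: Tc_def)
    then show "(if valid n K S B then y ^ Tc n K S B else 0) = (if B \<in> {{}, {1..n}} then 1 else 0)"
      using valid_full[OF n] B True by auto
  qed
  also have "\<dots> = (\<Sum>B\<in>Pow {1..n} \<inter> {B. B \<in> {{}, {1..n}}}. 1)"
    using sum.If_cases[of "Pow {1..n}" "\<lambda>B. B \<in> {{}, {1..n}}" "\<lambda>_. (1::'a)" "\<lambda>_. 0"] by simp
  also have "Pow {1..n} \<inter> {B. B \<in> {{}, {1..n}}} = {{}, {1..n::nat}}" by auto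
  also have "(\<Sum>B\<in>{{}, {1..n::nat}}. (1::'a)) = 2" using n by simp
  finally show ?thesis using True nc by simp
next
  case False
  note nt = False
  show ?thesis
  proof (cases "conn n K S")
    case True
    from valid_exists[OF n K S True] obtain B0 where B0': "B0 \<subseteq> {1..n} \<and> valid n K S B0" ..
    have B0: "B0 \<subseteq> {1..n}" "valid n K S B0" using B0' by auto
    have "(\<Sum>B\<in>Pow {1..n}. if valid n K S B then y ^ Tc n K S B else 0)
        = (\<Sum>B\<in>Pow {1..n}. if B0 = B then y ^ Tc n K S B0 else 0)"
    proof (intro sum.cong refl)
      fix B assume B: "B \<in> Pow {1..n}"
      show "(if valid n K S B then y ^ Tc n K S B else 0) = (if B0 = B then y ^ Tc n K S B0 else 0)"
      proof (cases "valid n K S B")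
        case True
        have "B0 = B" using valid_unique[OF n K S nt B0(1) B0(2), of B] B True by blast
        then show ?thesis using True by simp
      next
        case False
        then have "B0 \<noteq> B" using B0(2) by blast
        then show ?thesis using False by simp
      qed
    qed
    also have "\<dots> = y ^ Tc n K S B0" using B0 by simp
    also have "Tc n K S B0 = card K + card S - n"
      using valid_count[OF n K S B0(1) B0(2)] unfolding Tc_def by simp
    finally have X: "(\<Sum>B\<in>Pow {1..n}. if valid n K S B then y ^ Tc n K S B else 0) = y ^ (card K + card S - n)" .
    show ?thesis unfolding if_P[OF True] if_not_P[OF nt] using X by simp
  next
    case False
    have "(\<Sum>B\<in>Pow {1..n}. if valid n K S B then y ^ Tc n K S B else 0) = (\<Sum>B\<in>Pow {1..n}. 0)"
      using valid_conn[OF n K S nt] False by (intro sum.cong refl) auto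
    then show ?thesis unfolding if_not_P[OF False] if_not_P[OF nt] by simp
  qed
qed




lemma rhs_eq:
  fixes x :: "'a::comm_ring_1"
  assumes n: "3 \<le> n"
  shows "(\<Sum>k\<le>card (cycle_edges n). of_nat (cycle_subgraph_count k n) * x ^ k)
       = (\<Sum>A\<in>Pow {1..n}. \<Prod>i\<in>{1..n}. if prv n i \<in> A \<and> i \<in> A then 1 + x else 1) - 1"
proof -
  let ?I = "{1..n::nat}"
  let ?CE = "cycle_edges n"
  have finCE: "finite ?CE" using cycle_edges_ed[OF n] by simp
  define FA where "FA A = {e\<in>?CE. e \<subseteq> A}" for A
  define P where "P = (SIGMA A:(Pow ?I - {{}}). Pow (FA A))"
  have finP: "finite P" unfolding P_def FA_def using finCE by (intro finite_SigmaI) auto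
  have cnt: "cycle_subgraph_count k n = card {p\<in>P. card (snd p) = k}" for k
    unfolding cycle_subgraph_count_def P_def FA_def
    by (rule arg_cong[where f=card]) auto
  have "(\<Sum>k\<le>card ?CE. of_nat (cycle_subgraph_count k n) * x ^ k)
      = (\<Sum>k\<le>card ?CE. of_nat (card {p\<in>P. card (snd p) = k}) * x ^ k)" by (simp add: cnt)
  also have "\<dots> = (\<Sum>p\<in>P. x ^ card (snd p))"
  proof (rule group_pow[symmetric, OF finP])
    show "\<forall>p\<in>P. card (snd p) \<le> card ?CE"
      unfolding P_def FA_def using finCE by (auto intro: card_mono)
  qed
  also have "\<dots> = (\<Sum>A\<in>Pow ?I - {{}}. \<Sum>E\<in>Pow (FA A). x ^ card E)"
    unfolding P_def using finCE
    by (subst sum.Sigma) (auto simp: FA_def case_prod_unfold)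
  also have "\<dots> = (\<Sum>A\<in>Pow ?I - {{}}. \<Prod>i\<in>?I. if prv n i \<in> A \<and> i \<in> A then 1 + x else 1)"
  proof (rule sum.cong[OF refl])
    fix A assume A: "A \<in> Pow ?I - {{}}"
    have finFA: "finite (FA A)" using finCE by (simp add: FA_def)
    have "FA A = ed n ` {i\<in>?I. prv n i \<in> A \<and> i \<in> A}"
      unfolding FA_def cycle_edges_ed[OF n] by (auto simp: ed_def)
    moreover have sub: "{i\<in>?I. prv n i \<in> A \<and> i \<in> A} \<subseteq> ?I" by blast
    ultimately have cF: "card (FA A) = card {i\<in>?I. prv n i \<in> A \<and> i \<in> A}"
      using card_image[OF inj_on_subset[OF ed_inj[OF n] sub]] by simp
    have "(\<Sum>E\<in>Pow (FA A). x ^ card E) = (1 + x) ^ card (FA A)" by (rule sum_Pow_pow[OF finFA])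
    also have "\<dots> = (\<Prod>i\<in>?I. if prv n i \<in> A \<and> i \<in> A then 1 + x else 1)"
      unfolding cF by (rule prod_if_pow[symmetric]) simp
    finally show "(\<Sum>E\<in>Pow (FA A). x ^ card E) = (\<Prod>i\<in>?I. if prv n i \<in> A \<and> i \<in> A then 1 + x else 1)" .
  qed
  also have "\<dots> = (\<Sum>A\<in>Pow ?I. \<Prod>i\<in>?I. if prv n i \<in> A \<and> i \<in> A then 1 + x else 1) - 1"
  proof -
    have "(\<Sum>A\<in>Pow ?I. \<Prod>i\<in>?I. if prv n i \<in> A \<and> i \<in> A then 1 + x else 1)
        = (\<Prod>i\<in>?I. if prv n i \<in> {} \<and> i \<in> {} then 1 + x else 1)
          + (\<Sum>A\<in>Pow ?I - {{}}. \<Prod>i\<in>?I. if prv n i \<in> A \<and> i \<in> A then 1 + x else 1)"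
      by (rule sum.remove) auto
    then show ?thesis by simp
  qed
  finally show ?thesis .
qed

theorem mainTheorem8:
  fixes n :: nat and x :: "'a::comm_ring_1"
  assumes "n \<ge> 3"
  shows "1 + tutte (wheel_vertices n) (wheel_edges n) 1 x
           = (\<Sum>k\<le>card (cycle_edges n). of_nat (cycle_subgraph_count k n) * x ^ k)"
proof -
  have n: "3 \<le> n" using assms .
  let ?I = "{1..n::nat}"
  define G where "G B = (\<Prod>i\<in>?I. if prv n i \<in> B \<and> i \<in> B then 1 + x else 1)" for B
  define L where "L B K S = (\<Prod>i\<in>?I. loc (x - 1) (prv n i \<in> B) (i \<in> K) (i \<in> S) (i \<in> B))" for B K S
  have GL: "G B = (\<Sum>K\<in>Pow ?I. \<Sum>S\<in>Pow ?I. L B K S)" for B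
  proof -
    have inner: "(\<Sum>S\<in>Pow ?I. L B K S)
        = (\<Prod>i\<in>?I. loc (x - 1) (prv n i \<in> B) (i \<in> K) True (i \<in> B)
                    + loc (x - 1) (prv n i \<in> B) (i \<in> K) False (i \<in> B))" for K
      unfolding L_def
      using sum_Pow_prod[of ?I "\<lambda>i s. loc (x - 1) (prv n i \<in> B) (i \<in> K) s (i \<in> B)"] by simp
    have "(\<Sum>K\<in>Pow ?I. \<Sum>S\<in>Pow ?I. L B K S)
        = (\<Sum>K\<in>Pow ?I. \<Prod>i\<in>?I. (\<lambda>i c. loc (x - 1) (prv n i \<in> B) c True (i \<in> B)
                    + loc (x - 1) (prv n i \<in> B) c False (i \<in> B)) i (i \<in> K))"
      by (intro sum.cong refl) (rule inner)
    also have "\<dots> = (\<Prod>i\<in>?I. (loc (x - 1) (prv n i \<in> B) True True (i \<in> B)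
                    + loc (x - 1) (prv n i \<in> B) True False (i \<in> B))
                  + (loc (x - 1) (prv n i \<in> B) False True (i \<in> B)
                    + loc (x - 1) (prv n i \<in> B) False False (i \<in> B)))"
      by (rule sum_Pow_prod) simp
    also have "\<dots> = G B" unfolding G_def loc_sum by simp
    finally show ?thesis by simp
  qed
  have "(\<Sum>B\<in>Pow ?I. G B) = (\<Sum>B\<in>Pow ?I. \<Sum>K\<in>Pow ?I. \<Sum>S\<in>Pow ?I. L B K S)" by (simp add: GL)
  also have "\<dots> = (\<Sum>K\<in>Pow ?I. \<Sum>B\<in>Pow ?I. \<Sum>S\<in>Pow ?I. L B K S)" by (rule sum.swap)
  also have "\<dots> = (\<Sum>K\<in>Pow ?I. \<Sum>S\<in>Pow ?I. \<Sum>B\<in>Pow ?I. L B K S)"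
    by (rule sum.cong[OF refl]) (rule sum.swap)
  also have "\<dots> = (\<Sum>K\<in>Pow ?I. \<Sum>S\<in>Pow ?I.
        (if conn n K S then (x - 1) ^ (card K + card S - n) else 0) + (if K = ?I \<and> S = {} then 2 else 0))"
  proof (intro sum.cong refl)
    fix K S assume K: "K \<in> Pow ?I" and S: "S \<in> Pow ?I"
    have "(\<Sum>B\<in>Pow ?I. L B K S) = (\<Sum>B\<in>Pow ?I. if valid n K S B then (x - 1) ^ Tc n K S B else 0)"
      unfolding L_def prod_loc ..
    also have "\<dots> = (if conn n K S then (x - 1) ^ (card K + card S - n) else 0) + (if K = ?I \<and> S = {} then 2 else 0)"
      using K S by (intro sumB[OF n]) auto
    finally show "(\<Sum>B\<in>Pow ?I. L B K S) = (if conn n K S then (x - 1) ^ (card K + card S - n) else 0) + (if K = ?I \<and> S = {} then 2 else 0)" .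
  qed
  also have "\<dots> = tutte {0..n} (wheel_edges n) 1 x
      + (\<Sum>K\<in>Pow ?I. \<Sum>S\<in>Pow ?I. (if K = ?I \<and> S = {} then 2 else 0))"
    unfolding tutte_eq[OF n] by (simp add: sum.distrib)
  also have "(\<Sum>K\<in>Pow ?I. \<Sum>S\<in>Pow ?I. (if K = ?I \<and> S = {} then 2 else 0)) = (2::'a)"
  proof -
    have "(\<Sum>K\<in>Pow ?I. \<Sum>S\<in>Pow ?I. (if K = ?I \<and> S = {} then 2 else 0))
        = (\<Sum>K\<in>Pow ?I. if K = ?I then (\<Sum>S\<in>Pow ?I. if S = {} then 2 else 0) else (0::'a))"
      by (intro sum.cong refl) auto
    also have "\<dots> = 2" by simp
    finally show ?thesis .
  qed
  finally have main: "(\<Sum>B\<in>Pow ?I. G B) = tutte {0..n} (wheel_edges n) 1 x + 2" .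
  have "(\<Sum>k\<le>card (cycle_edges n). of_nat (cycle_subgraph_count k n) * x ^ k) = (\<Sum>B\<in>Pow ?I. G B) - 1"
    unfolding G_def by (rule rhs_eq[OF n])
  then show ?thesis using main by (simp add: wheel_vertices_def algebra_simps)
qed


end
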